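(* Let $n\geq 3$ and $T\in\mathcal{T}_n$. Then $\chi(\mathrm{KG}(\mathcal{T}_n\setminus\{T\})) = n-2$ if and only if $T$ is not a star triangulation.
   Context: Label the vertices of a convex $n$-gon by $1,\dots,n$ in cyclic order; $\mathrm{Diag}_n = \{\{i,j\} \subseteq [n]: i-j\not\equiv \pm1 \pmod n\}$; a triangulation is identified with its set of diagonals, and $\mathcal{T}_n$ is the set of triangulations. For a set system $\mathcal{F}$, $\mathrm{KG}(\mathcal{F})$ is the graph on $\mathcal{F}$ with $F,F'$ adjacent iff $F\cap F'=\emptyset$. A star triangulation is one consisting of the $n-3$ diagonals emanating from a single vertex. *)

theory Defs
  imports Main
begin

text \<open>Vertices of the convex n-gon are 1..n in cyclic order. A diagonal is a
2-element set {i,j} of vertices that are not cyclically adjacent.\<close>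
definition diags :: "nat \<Rightarrow> nat set set" where
  "diags n = {{i, j} | i j. i \<in> {1..n} \<and> j \<in> {1..n} \<and> i \<noteq> j
      \<and> i mod n \<noteq> (j + 1) mod n \<and> j mod n \<noteq> (i + 1) mod n}"

definition crosses :: "nat set \<Rightarrow> nat set \<Rightarrow> bool" where
  "crosses d e \<longleftrightarrow> (\<exists>a b c c'. a < c \<and> c < b \<and> b < c' \<and>
      ((d = {a, b} \<and> e = {c, c'}) \<or> (e = {a, b} \<and> d = {c, c'})))"

text \<open>A triangulation (identified with its set of diagonals) is a maximal set
of pairwise non-crossing diagonals.\<close>
definition triangulations :: "nat \<Rightarrow> nat set set set" where
  "triangulations n = {T. T \<subseteq> diags n
      \<and> (\<forall>d\<in>T. \<forall>e\<in>T. \<not> crosses d e)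
      \<and> (\<forall>d\<in>diags n - T. \<exists>e\<in>T. crosses d e)}"

definition is_star :: "nat \<Rightarrow> nat set set \<Rightarrow> bool" where
  "is_star n T \<longleftrightarrow> (\<exists>v\<in>{1..n}. T = {d \<in> diags n. v \<in> d})"

definition kneser_adj :: "'a set \<Rightarrow> 'a set \<Rightarrow> bool" where
  "kneser_adj F G \<longleftrightarrow> F \<noteq> G \<and> F \<inter> G = {}"

definition chromatic_number :: "'v set \<Rightarrow> ('v \<Rightarrow> 'v \<Rightarrow> bool) \<Rightarrow> nat" where
  "chromatic_number V adj = (LEAST k. \<exists>f :: 'v \<Rightarrow> nat.
      (\<forall>x\<in>V. f x < k) \<and> (\<forall>x\<in>V. \<forall>y\<in>V. adj x y \<longrightarrow> f x \<noteq> f y))"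

end

theory Submission
  imports Defs
begin


lemma crosses_iff:
  assumes "x < (y::nat)" "z < w"
  shows "crosses {x,y} {z,w} \<longleftrightarrow> (x<z \<and> z<y \<and> y<w) \<or> (z<x \<and> x<w \<and> w<y)"
  using assms unfolding crosses_def doubleton_eq_iff by (auto; linarith?)

lemma crosses_sym: "crosses d e \<longleftrightarrow> crosses e d"
  unfolding crosses_def by blast

lemma crosses_disj: "crosses d e \<Longrightarrow> d \<inter> e = {}"
  unfolding crosses_def by auto

lemma crosses_irrefl: "\<not> crosses d d"
  unfolding crosses_def by (auto simp: doubleton_eq_iff)

definition dg :: "nat \<Rightarrow> nat \<Rightarrow> nat \<Rightarrow> bool" where
  "dg n a b \<longleftrightarrow> 1 \<le> a \<and> a + 2 \<le> b \<and> b \<le> n \<and> \<not> (a = 1 \<and> b = n)"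

lemma diags_iff:
  assumes "n \<ge> 3"
  shows "d \<in> diags n \<longleftrightarrow> (\<exists>a b. d = {a,b} \<and> dg n a b)"
proof
  assume "d \<in> diags n"
  then obtain i j where d: "d = {i,j}" and ij: "i \<in> {1..n}" "j \<in> {1..n}" "i \<noteq> j"
    "i mod n \<noteq> (j + 1) mod n" "j mod n \<noteq> (i + 1) mod n"
    unfolding diags_def by blast
  have key: "dg n a b" if "a < b" "a \<in> {1..n}" "b \<in> {1..n}"
     "a mod n \<noteq> (b + 1) mod n" "b mod n \<noteq> (a + 1) mod n" for a b
  proof -
    have "b \<noteq> a + 1"
    proof
      assume "b = a + 1" then show False using that(5) by simp
    qed
    moreover have "\<not> (a = 1 \<and> b = n)"
    proof
      assume "a = 1 \<and> b = n"
      then show False using that(4) assms by (simp add: mod_Suc)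
    qed
    ultimately show ?thesis using that unfolding dg_def by auto
  qed
  show "\<exists>a b. d = {a,b} \<and> dg n a b"
  proof (cases "i < j")
    case True then show ?thesis using key[of i j] ij d by blast
  next
    case False then have "j < i" using ij by auto
    then show ?thesis using key[of j i] ij d by (metis insert_commute)
  qed
next
  assume "\<exists>a b. d = {a,b} \<and> dg n a b"
  then obtain a b where d: "d = {a,b}" and g: "dg n a b" by blast
  have 1: "a mod n \<noteq> (b + 1) mod n"
  proof (cases "b = n")
    case True
    then have "(b+1) mod n = 1" using assms by (simp add: mod_Suc)
    moreover have "a mod n = a" using g True unfolding dg_def by auto
    ultimately show ?thesis using g True unfolding dg_def by auto
  next
    case False
    then have "(b+1) mod n = (if b + 1 = n then 0 else b+1)" using g unfolding dg_def
      by (simp add: mod_Suc)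
    moreover have "a mod n = a" using g unfolding dg_def by auto
    ultimately show ?thesis using g unfolding dg_def by auto
  qed
  have 2: "b mod n \<noteq> (a + 1) mod n"
  proof -
    have "(a+1) mod n = a + 1" using g unfolding dg_def by auto
    moreover have "b mod n = (if b = n then 0 else b)" using g unfolding dg_def by auto
    ultimately show ?thesis using g unfolding dg_def by auto
  qed
  show "d \<in> diags n" unfolding diags_def using d g 1 2 unfolding dg_def
    by (intro CollectI exI[of _ a] exI[of _ b]) auto
qed

lemma diagE:
  assumes "n \<ge> 3" "d \<in> diags n"
  obtains a b where "d = {a,b}" "1 \<le> a" "a + 2 \<le> b" "b \<le> n" "\<not> (a = 1 \<and> b = n)"
proof -
  obtain a b where "d = {a,b}" "dg n a b" using assms diags_iff by blast
  then show ?thesis using that unfolding dg_def by blast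
qed

lemma diagI:
  assumes "n \<ge> 3" "1 \<le> a" "a + 2 \<le> b" "b \<le> n" "\<not> (a = 1 \<and> b = n)"
  shows "{a,b} \<in> diags n"
proof -
  have "dg n a b" using assms unfolding dg_def by blast
  then show ?thesis using diags_iff[OF assms(1)] by blast
qed

lemma tri_sub: "T \<in> triangulations n \<Longrightarrow> T \<subseteq> diags n"
  unfolding triangulations_def by blast

lemma tri_nc: "T \<in> triangulations n \<Longrightarrow> d \<in> T \<Longrightarrow> e \<in> T \<Longrightarrow> \<not> crosses d e"
  unfolding triangulations_def by blast

lemma tri_max: "T \<in> triangulations n \<Longrightarrow> d \<in> diags n \<Longrightarrow> d \<notin> T \<Longrightarrow> \<exists>e\<in>T. crosses d e"
  unfolding triangulations_def by blast

lemma triI: "T \<subseteq> diags n \<Longrightarrow> (\<And>d e. d \<in> T \<Longrightarrow> e \<in> T \<Longrightarrow> \<not> crosses d e)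
   \<Longrightarrow> (\<And>d. d \<in> diags n \<Longrightarrow> d \<notin> T \<Longrightarrow> \<exists>e\<in>T. crosses d e) \<Longrightarrow> T \<in> triangulations n"
  unfolding triangulations_def by blast

definition star :: "nat \<Rightarrow> nat \<Rightarrow> nat set set" where
  "star n v = {d \<in> diags n. v \<in> d}"

lemma tri_diagE:
  assumes "n \<ge> 3" "T \<in> triangulations n" "d \<in> T"
  obtains a b where "d = {a,b}" "1 \<le> a" "a + 2 \<le> b" "b \<le> n" "\<not> (a = 1 \<and> b = n)"
proof -
  have "d \<in> diags n" using assms tri_sub by blast
  then show ?thesis using diagE[OF assms(1)] that by blast
qed

lemma C1:
  assumes n: "n \<ge> 4" and T: "T \<in> triangulations n" and no: "\<forall>j. {1,j} \<notin> T"
  shows "{2,n} \<in> T"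
proof (rule ccontr)
  assume a: "{2,n} \<notin> T"
  have "{2,n} \<in> diags n" using n by (intro diagI) auto
  then obtain e where e: "e \<in> T" "crosses {2,n} e" using tri_max[OF T] a by blast
  then obtain z w where zw: "e = {z,w}" "1 \<le> z" "z + 2 \<le> w" "w \<le> n"
    using tri_diagE[OF _ T e(1)] n by (metis Suc_leD eval_nat_numeral(2) semiring_norm(26) semiring_norm(27))
  have "(2<z \<and> z<n \<and> n<w) \<or> (z<2 \<and> 2<w \<and> w<n)"
    using e(2) zw crosses_iff[of 2 n z w] n by auto
  then have "z = 1" using zw by auto
  then show False using no e zw by auto
qed

definition colourable :: "'v set \<Rightarrow> ('v \<Rightarrow> 'v \<Rightarrow> bool) \<Rightarrow> nat \<Rightarrow> bool" where
  "colourable V adj k \<longleftrightarrow> (\<exists>f :: 'v \<Rightarrow> nat.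
      (\<forall>x\<in>V. f x < k) \<and> (\<forall>x\<in>V. \<forall>y\<in>V. adj x y \<longrightarrow> f x \<noteq> f y))"

lemma chrom_eq: "chromatic_number V adj = (LEAST k. colourable V adj k)"
  unfolding chromatic_number_def colourable_def by simp

lemma colourable_mono: "colourable V adj k \<Longrightarrow> k \<le> m \<Longrightarrow> colourable V adj m"
  unfolding colourable_def by (meson order_less_le_trans)

lemma colourable_sub: "colourable V adj k \<Longrightarrow> W \<subseteq> V \<Longrightarrow> colourable W adj k"
  unfolding colourable_def by (meson subsetD)

lemma colC:
  assumes n: "n \<ge> 4"
  shows "colourable (triangulations n) kneser_adj (n-2)"
proof -
  define f where "f S = (if \<exists>j. {1,j} \<in> S then (LEAST j. {1,j} \<in> S) - 3 else n - 3)" for S :: "nat set set"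
  have n3: "n \<ge> 3" using n by simp
  have bnd: "3 \<le> (LEAST j. {1,j} \<in> S) \<and> (LEAST j. {1,j} \<in> S) \<le> n - 1"
    if S: "S \<in> triangulations n" "\<exists>j. {1,j} \<in> S" for S
  proof -
    have m: "{1, LEAST j. {1,j} \<in> S} \<in> S" using that(2) by (metis LeastI)
    obtain a b where "{1, LEAST j. {1,j} \<in> S} = {a,b}" "1 \<le> a" "a + 2 \<le> b" "b \<le> n" "\<not> (a = 1 \<and> b = n)"
      using tri_diagE[OF n3 S(1) m] by blast
    then show ?thesis by (auto simp: doubleton_eq_iff)
  qed
  have lt: "f S < n - 3" if "S \<in> triangulations n" "\<exists>j. {1,j} \<in> S" for S
    using bnd[OF that] that n unfolding f_def by auto
  have rng: "f S < n - 2" if S: "S \<in> triangulations n" for S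
  proof (cases "\<exists>j. {1,j} \<in> S")
    case True then show ?thesis using lt[OF S] by auto
  next
    case False then show ?thesis using n unfolding f_def by auto
  qed
  have prp: "f S1 \<noteq> f S2" if S: "S1 \<in> triangulations n" "S2 \<in> triangulations n" "kneser_adj S1 S2" for S1 S2
  proof
    assume eq: "f S1 = f S2"
    have dis: "S1 \<inter> S2 = {}" using S(3) unfolding kneser_adj_def by auto
    consider (a) "\<exists>j. {1,j} \<in> S1" "\<exists>j. {1,j} \<in> S2" | (b) "\<not>(\<exists>j. {1,j} \<in> S1)" "\<not>(\<exists>j. {1,j} \<in> S2)"
      | (c) "\<exists>j. {1,j} \<in> S1" "\<not>(\<exists>j. {1,j} \<in> S2)" | (d) "\<not>(\<exists>j. {1,j} \<in> S1)" "\<exists>j. {1,j} \<in> S2" by blast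
    then show False
    proof cases
      case a
      then have "(LEAST j. {1,j} \<in> S1) = (LEAST j. {1,j} \<in> S2)"
        using eq bnd[OF S(1)] bnd[OF S(2)] unfolding f_def by auto
      moreover have "{1, LEAST j. {1,j} \<in> S1} \<in> S1" "{1, LEAST j. {1,j} \<in> S2} \<in> S2"
        using a by (metis LeastI)+
      ultimately show False using dis by auto
    next
      case b
      then have "{2,n} \<in> S1" "{2,n} \<in> S2" using C1[OF n] S by auto
      then show False using dis by auto
    next
      case c
      then show False using eq lt[OF S(1)] unfolding f_def by auto
    next
      case d
      then show False using eq lt[OF S(2)] unfolding f_def by auto
    qed
  qed
  show ?thesis unfolding colourable_def using rng prp by blast
qed

lemma diags3: "diags 3 = {}"
proof -
  { fix d assume "d \<in> diags 3"
    then obtain a b where "d = {a,b}" "1 \<le> a" "a + 2 \<le> b" "b \<le> 3" "\<not> (a = 1 \<and> b = 3)"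
      using diagE[of 3 d] by auto
    then have False by auto }
  then show ?thesis by blast
qed

lemma tri3: "T \<in> triangulations 3 \<Longrightarrow> T = {}"
  using tri_sub diags3 by blast

lemma D1:
  assumes n: "n \<ge> 4" and T: "T \<in> triangulations n" and ns: "T \<noteq> star n n"
  shows "\<exists>a. 1 \<le> a \<and> a + 2 \<le> n - 1 \<and> {a,a+2} \<in> T"
proof -
  have n3: "n \<ge> 3" using n by simp
  have "\<exists>d\<in>T. n \<notin> d"
  proof (rule ccontr)
    assume "\<not> (\<exists>d\<in>T. n \<notin> d)"
    then have all: "\<forall>d\<in>T. n \<in> d" by blast
    have "T \<subseteq> star n n" using all tri_sub[OF T] unfolding star_def by blast
    moreover have "star n n \<subseteq> T"
    proof
      fix d assume d: "d \<in> star n n"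
      show "d \<in> T"
      proof (rule ccontr)
        assume "d \<notin> T"
        then obtain e where "e \<in> T" "crosses d e" using tri_max[OF T] d unfolding star_def by blast
        then show False using crosses_disj[of d e] all d unfolding star_def by blast
      qed
    qed
    ultimately show False using ns by blast
  qed
  then obtain d where d: "d \<in> T" "n \<notin> d" by blast
  obtain a0 b0 where ab0: "d = {a0,b0}" "1 \<le> a0" "a0 + 2 \<le> b0" "b0 \<le> n" "\<not> (a0 = 1 \<and> b0 = n)"
    by (rule tri_diagE[OF n3 T d(1)])
  define P where "P p \<longleftrightarrow> (\<exists>a b. p = b - a \<and> {a,b} \<in> T \<and> a + 2 \<le> b \<and> b < n \<and> 1 \<le> a)" for p
  have P0: "P (b0 - a0)" unfolding P_def using ab0 d by (intro exI[of _ a0] exI[of _ b0]) auto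
  define p where "p = (LEAST p. P p)"
  have Pp: "P p" unfolding p_def using P0 by (rule LeastI)
  have pmin: "p \<le> q" if "P q" for q unfolding p_def using that by (rule Least_le)
  obtain a b where ab: "p = b - a" "{a,b} \<in> T" "a + 2 \<le> b" "b < n" "1 \<le> a"
    using Pp unfolding P_def by blast
  have "b = a + 2"
  proof (rule ccontr)
    assume "b \<noteq> a + 2"
    then have b3: "a + 3 \<le> b" using ab by auto
    have dg2: "{a,a+2} \<in> diags n" using ab b3 by (intro diagI[OF n3]) auto
    show False
    proof (cases "{a,a+2} \<in> T")
      case True
      then have "P 2" unfolding P_def using ab b3 by (intro exI[of _ a] exI[of _ "a+2"]) auto
      then show False using pmin ab b3 by force
    next
      case False
      then obtain e where e: "e \<in> T" "crosses {a,a+2} e" using tri_max[OF T dg2] by blast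
      obtain z w where zw: "e = {z,w}" "1 \<le> z" "z + 2 \<le> w" "w \<le> n" "\<not> (z = 1 \<and> w = n)"
    by (rule tri_diagE[OF n3 T e(1)])
      have c: "(a<z \<and> z<a+2 \<and> a+2<w) \<or> (z<a \<and> a<w \<and> w<a+2)"
        using e(2) zw crosses_iff[of a "a+2" z w] by auto
      have nc: "\<not> crosses {a,b} {z,w}" using tri_nc[OF T ab(2) e(1)] zw by simp
      then have nc': "\<not> ((a<z \<and> z<b \<and> b<w) \<or> (z<a \<and> a<w \<and> w<b))"
        using crosses_iff[of a b z w] ab zw by auto
      from c show False
      proof
        assume c1: "a<z \<and> z<a+2 \<and> a+2<w"
        then have "w \<le> b" using nc' b3 by auto
        then have "P (w - z)" unfolding P_def using zw e ab by (intro exI[of _ z] exI[of _ w]) auto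
        then show False using pmin ab c1 \<open>w \<le> b\<close> by force
      next
        assume "z<a \<and> a<w \<and> w<a+2"
        then show False using nc' b3 by auto
      qed
    qed
  qed
  then show ?thesis using ab by auto
qed

lemma tri_pos:
  assumes "n \<ge> 3" "S \<in> triangulations n" "{x,y} \<in> S"
  shows "1 \<le> x"
proof -
  obtain a b where "{x,y} = {a,b}" "1 \<le> a" "a + 2 \<le> b" "b \<le> n" "\<not> (a = 1 \<and> b = n)"
    by (rule tri_diagE[OF assms])
  then show ?thesis by (auto simp: doubleton_eq_iff)
qed

lemma colD:
  assumes n: "n \<ge> 3"
  shows "colourable (triangulations n - {star n n}) kneser_adj (n-3)"
proof (cases "n = 3")
  case True
  have a: "triangulations 3 \<subseteq> {{}}" using tri3 by blast
  have b: "star 3 3 = {}" by (simp add: star_def diags3)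
  have "triangulations n - {star n n} = {}"
    using a b True by blast
  then show ?thesis unfolding colourable_def by auto
next
  case False
  then have n4: "n \<ge> 4" using n by auto
  define f where "f S = (LEAST a. {a,a+2} \<in> S) - 1" for S :: "nat set set"
  have bnd: "1 \<le> (LEAST a. {a,a+2} \<in> S) \<and> (LEAST a. {a,a+2} \<in> S) \<le> n - 3 \<and> {LEAST a. {a,a+2} \<in> S, (LEAST a. {a,a+2} \<in> S) + 2} \<in> S"
    if S: "S \<in> triangulations n - {star n n}" for S
  proof -
    have S1: "S \<in> triangulations n" "S \<noteq> star n n" using S by auto
    obtain a where a: "1 \<le> a" "a + 2 \<le> n - 1" "{a,a+2} \<in> S" using D1[OF n4 S1] by blast
    define L where "L = (LEAST a. {a,a+2} \<in> S)"
    have m: "{L, L + 2} \<in> S" unfolding L_def using a(3) by (rule LeastI)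
    have le: "L \<le> a" unfolding L_def using a(3) by (rule Least_le)
    have "1 \<le> L" using tri_pos[OF n S1(1) m] .
    then show ?thesis using le a(2) m unfolding L_def by linarith
  qed
  have rng: "f S < n - 3" if "S \<in> triangulations n - {star n n}" for S
    using bnd[OF that] n4 unfolding f_def by auto
  have prp: "f S1 \<noteq> f S2" if S: "S1 \<in> triangulations n - {star n n}" "S2 \<in> triangulations n - {star n n}"
     "kneser_adj S1 S2" for S1 S2
  proof
    assume "f S1 = f S2"
    then have "(LEAST a. {a,a+2} \<in> S1) = (LEAST a. {a,a+2} \<in> S2)"
      using bnd[OF S(1)] bnd[OF S(2)] unfolding f_def by auto
    then show False using bnd[OF S(1)] bnd[OF S(2)] S(3) unfolding kneser_adj_def by auto
  qed
  show ?thesis unfolding colourable_def using rng prp by blast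
qed

lemma E1:
  assumes n: "n \<ge> 5" and T: "T \<in> triangulations n" and ns: "T \<noteq> star n n"
  shows "\<exists>v d e. d \<in> T \<and> e \<in> T \<and> d \<noteq> e \<and> v \<in> d \<and> v \<in> e"
proof -
  have n3: "n \<ge> 3" and n4: "n \<ge> 4" using n by auto
  obtain a where a: "1 \<le> a" "a + 2 \<le> n - 1" "{a,a+2} \<in> T" using D1[OF n4 T ns] by blast
  have dg3: "{a,a+3} \<in> diags n" using a n by (intro diagI[OF n3]) auto
  show ?thesis
  proof (cases "{a,a+3} \<in> T")
    case True
    then show ?thesis using a by (intro exI[of _ a] exI[of _ "{a,a+2}"] exI[of _ "{a,a+3}"]) (auto simp: doubleton_eq_iff)
  next
    case False
    then obtain e where e: "e \<in> T" "crosses {a,a+3} e" using tri_max[OF T dg3] by blast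
    obtain z w where zw: "e = {z,w}" "1 \<le> z" "z + 2 \<le> w" "w \<le> n" "\<not> (z = 1 \<and> w = n)"
    by (rule tri_diagE[OF n3 T e(1)])
    have c: "(a<z \<and> z<a+3 \<and> a+3<w) \<or> (z<a \<and> a<w \<and> w<a+3)"
      using e(2) zw crosses_iff[of a "a+3" z w] by auto
    have nc: "\<not> crosses {a,a+2} {z,w}" using tri_nc[OF T a(3) e(1)] zw by simp
    then have nc': "\<not> ((a<z \<and> z<a+2 \<and> a+2<w) \<or> (z<a \<and> a<w \<and> w<a+2))"
      using crosses_iff[of a "a+2" z w] zw by auto
    have "(z = a+2 \<and> a + 3 < w) \<or> (w = a + 2 \<and> z < a)" using c nc' by auto
    then show ?thesis
    proof
      assume "z = a+2 \<and> a + 3 < w"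
      then show ?thesis using a e zw
        by (intro exI[of _ "a+2"] exI[of _ "{a,a+2}"] exI[of _ e]) (auto simp: doubleton_eq_iff)
    next
      assume "w = a + 2 \<and> z < a"
      then show ?thesis using a e zw
        by (intro exI[of _ "a+2"] exI[of _ "{a,a+2}"] exI[of _ e]) (auto simp: doubleton_eq_iff)
    qed
  qed
qed

lemma mycielski:
  assumes col: "colourable V adj k" and w: "w \<in> V" and gV: "\<forall>a\<in>A. g a \<in> V" and sV: "\<forall>a\<in>A. sh a \<in> V"
    and ws: "\<forall>a\<in>A. adj w (sh a)"
    and gg: "\<forall>a1\<in>A. \<forall>a2\<in>A. adjA a1 a2 \<longrightarrow> adj (g a1) (g a2) \<and> adj (sh a1) (g a2) \<and> adj (g a1) (sh a2)"
  shows "colourable A adjA (k - 1)"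
proof -
  obtain f where f: "\<forall>x\<in>V. f x < k" "\<forall>x\<in>V. \<forall>y\<in>V. adj x y \<longrightarrow> f x \<noteq> f y"
    using col unfolding colourable_def by blast
  define c where "c = f w"
  have ck: "c < k" using f(1) w unfolding c_def by blast
  define x where "x a = (if f (g a) = c then f (sh a) else f (g a))" for a
  define h where "h a = (if x a > c then x a - 1 else x a)" for a
  have xc: "x a \<noteq> c \<and> x a < k" if a: "a \<in> A" for a
  proof -
    have "f (sh a) \<noteq> c" using f(2) w sV ws a unfolding c_def by metis
    then show ?thesis unfolding x_def using f(1) gV sV a by auto
  qed
  have hk: "h a < k - 1" if "a \<in> A" for a
    using xc[OF that] ck unfolding h_def by auto
  have xd: "x a1 \<noteq> x a2" if a: "a1 \<in> A" "a2 \<in> A" "adjA a1 a2" for a1 a2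
  proof -
    have 1: "f (g a1) \<noteq> f (g a2)" "f (sh a1) \<noteq> f (g a2)" "f (g a1) \<noteq> f (sh a2)"
      using gg a f(2) gV sV by meson+
    then show ?thesis unfolding x_def by auto
  qed
  have hd: "h a1 \<noteq> h a2" if a: "a1 \<in> A" "a2 \<in> A" "adjA a1 a2" for a1 a2
    using xd[OF a] xc[OF a(1)] xc[OF a(2)] unfolding h_def by auto
  show ?thesis unfolding colourable_def using hk hd by blast
qed

definition inside :: "nat \<Rightarrow> nat set \<Rightarrow> bool" where
  "inside j d \<longleftrightarrow> (\<exists>a b. d = {a,b} \<and> a < j \<and> j < b)"

definition valid :: "nat \<Rightarrow> nat set set \<Rightarrow> nat \<Rightarrow> bool" where
  "valid n T j \<longleftrightarrow> 2 \<le> j \<and> j \<le> n - 2 \<and> (\<forall>d\<in>T. \<not> inside j d)"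

definition NN :: "nat \<Rightarrow> nat set set \<Rightarrow> nat set set" where
  "NN n T = {{j,n} | j. valid n T j}"

definition gE :: "nat \<Rightarrow> nat set set \<Rightarrow> nat set set" where
  "gE n T = T \<union> NN n T"

definition shE :: "nat \<Rightarrow> nat set set \<Rightarrow> nat set set" where
  "shE n T = insert {1,n-1} T"

lemma tri_pre:
  assumes n: "n \<ge> 4" and T: "T \<in> triangulations (n-1)" and d: "d \<in> T"
  obtains a b where "d = {a,b}" "1 \<le> a" "a + 2 \<le> b" "b \<le> n - 1" "\<not> (a = 1 \<and> b = n - 1)"
proof -
  have "n - 1 \<ge> 3" using n by simp
  then show ?thesis using tri_diagE[of "n-1" T d] T d that by blast
qed

lemma notn: "n \<ge> 4 \<Longrightarrow> T \<in> triangulations (n-1) \<Longrightarrow> d \<in> T \<Longrightarrow> n \<notin> d"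
  by (rule tri_pre) auto

lemma pre_diag:
  assumes n: "n \<ge> 4" and T: "T \<in> triangulations (n-1)" and d: "d \<in> T"
  shows "d \<in> diags n"
proof -
  obtain a b where "d = {a,b}" "1 \<le> a" "a + 2 \<le> b" "b \<le> n - 1" "\<not> (a = 1 \<and> b = n - 1)"
    by (rule tri_pre[OF n T d])
  then show ?thesis using n by (auto intro!: diagI)
qed

lemma not_1n1: assumes n: "n \<ge> 4" shows "{1,n-1} \<notin> diags (n-1)"
proof
  assume a: "{1,n-1} \<in> diags (n-1)"
  have "n - 1 \<ge> 3" using n by simp
  then obtain x y where "{1,n-1} = {x,y}" "1 \<le> x" "x + 2 \<le> y" "y \<le> n - 1" "\<not> (x = 1 \<and> y = n - 1)"
    using diagE a by blast
  then show False by (auto simp: doubleton_eq_iff)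
qed

lemma K:
  assumes n: "n \<ge> 4" and T: "T \<in> triangulations (n-1)" and v: "valid n T j"
  shows "({1,j} \<in> T \<or> j = 2) \<and> ({j,n-1} \<in> T \<or> j = n - 2)"
proof -
  have n3: "n - 1 \<ge> 3" using n by simp
  have j: "2 \<le> j" "j \<le> n - 2" and ni: "\<forall>d\<in>T. \<not> inside j d" using v unfolding valid_def by auto
  have A: "{1,j} \<in> T" if j3: "j \<ge> 3"
  proof (rule ccontr)
    assume na: "{1,j} \<notin> T"
    have "{1,j} \<in> diags (n-1)" using j j3 n by (intro diagI[OF n3]) auto
    then obtain e where e: "e \<in> T" "crosses {1,j} e" using tri_max[OF T] na by blast
    obtain z w where zw: "e = {z,w}" "1 \<le> z" "z + 2 \<le> w" "w \<le> n - 1" "\<not> (z = 1 \<and> w = n - 1)"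
      by (rule tri_pre[OF n T e(1)])
    have "(1<z \<and> z<j \<and> j<w) \<or> (z<1 \<and> 1<w \<and> w<j)" using e(2) zw crosses_iff[of 1 j z w] j3 by auto
    then have "inside j e" using zw unfolding inside_def by auto
    then show False using ni e by blast
  qed
  have B: "{j,n-1} \<in> T" if j3: "j \<le> n - 3"
  proof (rule ccontr)
    assume na: "{j,n-1} \<notin> T"
    have "{j,n-1} \<in> diags (n-1)" using j j3 n by (intro diagI[OF n3]) auto
    then obtain e where e: "e \<in> T" "crosses {j,n-1} e" using tri_max[OF T] na by blast
    obtain z w where zw: "e = {z,w}" "1 \<le> z" "z + 2 \<le> w" "w \<le> n - 1" "\<not> (z = 1 \<and> w = n - 1)"
      by (rule tri_pre[OF n T e(1)])
    have "(j<z \<and> z<n-1 \<and> n-1<w) \<or> (z<j \<and> j<w \<and> w<n-1)" using e(2) zw crosses_iff[of j "n-1" z w] j3 n by auto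
    then have "inside j e" using zw unfolding inside_def by auto
    then show False using ni e by blast
  qed
  show ?thesis using A B j by force
qed

lemma X:
  assumes n: "n \<ge> 4" and T: "T \<in> triangulations (n-1)"
  shows "\<exists>j. valid n T j"
proof (cases "\<exists>x. {1,x} \<in> T")
  case True
  define S where "S = {x. {1,x} \<in> T}"
  have Ssub: "S \<subseteq> {..n}"
  proof
    fix x assume "x \<in> S"
    then have "n \<notin> {1,x}" "{1,x} \<in> T" using notn[OF n T] unfolding S_def by auto
    then obtain a b where "{1,x} = {a,b}" "1 \<le> a" "a + 2 \<le> b" "b \<le> n - 1" "\<not> (a = 1 \<and> b = n - 1)"
      using tri_pre[OF n T] by metis
    then show "x \<in> {..n}" by (auto simp: doubleton_eq_iff)
  qed
  have fin: "finite S" using Ssub finite_subset by blast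
  have ne: "S \<noteq> {}" using True unfolding S_def by auto
  define j where "j = Max S"
  have jS: "{1,j} \<in> T" using Max_in[OF fin ne] unfolding j_def S_def by auto
  have jmax: "x \<le> j" if "{1,x} \<in> T" for x using Max_ge[OF fin] that unfolding j_def S_def by auto
  obtain a b where ab: "{1,j} = {a,b}" "1 \<le> a" "a + 2 \<le> b" "b \<le> n - 1" "\<not> (a = 1 \<and> b = n - 1)"
    by (rule tri_pre[OF n T jS])
  have j3: "3 \<le> j" "j \<le> n - 2" using ab by (auto simp: doubleton_eq_iff)
  have "\<not> inside j d" if d: "d \<in> T" for d
  proof
    assume "inside j d"
    then obtain x y where xy: "d = {x,y}" "x < j" "j < y" unfolding inside_def by blast
    have x1: "1 \<le> x" using tri_pos[of "n-1" T x y] n T d xy by auto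
    show False
    proof (cases "x = 1")
      case True then show False using jmax[of y] d xy by auto
    next
      case False
      then have "crosses {1,j} {x,y}" using crosses_iff[of 1 j x y] x1 xy j3 by auto
      then show False using tri_nc[OF T jS d] xy by simp
    qed
  qed
  then have "valid n T j" using j3 unfolding valid_def by auto
  then show ?thesis by blast
next
  case False
  have "\<not> inside 2 d" if d: "d \<in> T" for d
  proof
    assume "inside 2 d"
    then obtain x y where xy: "d = {x,y}" "x < 2" "2 < y" unfolding inside_def by blast
    have x1: "1 \<le> x" using tri_pos[of "n-1" T x y] n T d xy by auto
    then have "x = 1" using xy by auto
    then show False using False d xy by auto
  qed
  then show ?thesis using n unfolding valid_def by (intro exI[of _ 2]) auto
qed

lemma U:
  assumes n: "n \<ge> 4" and T: "T \<in> triangulations (n-1)" and v: "valid n T j" "valid n T j'"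
  shows "j = j'"
proof (rule ccontr)
  assume "j \<noteq> j'"
  then consider "j < j'" | "j' < j" by linarith
  then show False
  proof cases
    case 1
    then have a: "{1,j'} \<in> T" "{j,n-1} \<in> T" using K[OF n T v(1)] K[OF n T v(2)] v unfolding valid_def by auto
    have "crosses {1,j'} {j,n-1}" using crosses_iff[of 1 j' j "n-1"] 1 v n unfolding valid_def by auto
    then show False using tri_nc[OF T a] by simp
  next
    case 2
    then have a: "{1,j} \<in> T" "{j',n-1} \<in> T" using K[OF n T v(1)] K[OF n T v(2)] v unfolding valid_def by auto
    have "crosses {1,j} {j',n-1}" using crosses_iff[of 1 j j' "n-1"] 2 v n unfolding valid_def by auto
    then show False using tri_nc[OF T a] by simp
  qed
qed

lemma NN_iff: "e \<in> NN n T \<longleftrightarrow> (\<exists>j. e = {j,n} \<and> valid n T j)"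
  unfolding NN_def by blast

lemma S1:
  assumes n: "n \<ge> 4" and T: "T \<in> triangulations (n-1)"
  shows "gE n T \<in> triangulations n"
proof (rule triI)
  have n3: "n \<ge> 3" using n by simp
  show "gE n T \<subseteq> diags n"
  proof
    fix d assume "d \<in> gE n T"
    then consider "d \<in> T" | j where "d = {j,n}" "valid n T j" unfolding gE_def Un_iff NN_iff by blast
    then show "d \<in> diags n"
    proof cases
      case 1 then show ?thesis using pre_diag[OF n T] by blast
    next
      case 2 then show ?thesis unfolding valid_def using n by (auto intro!: diagI)
    qed
  qed
  show "\<not> crosses d e" if d: "d \<in> gE n T" and e: "e \<in> gE n T" for d e
  proof -
    have mixed: "\<not> crosses d e" if d: "d \<in> T" and e: "e = {j,n}" "valid n T j" for d e j
    proof
      assume c: "crosses d e"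
      obtain a b where ab: "d = {a,b}" "1 \<le> a" "a + 2 \<le> b" "b \<le> n - 1" "\<not> (a = 1 \<and> b = n - 1)"
        by (rule tri_pre[OF n T d])
      have j: "j < n" using e n unfolding valid_def by auto
      have "(a<j \<and> j<b \<and> b<n) \<or> (j<a \<and> a<n \<and> n<b)" using crosses_iff[of a b j n] c ab e j by auto
      then have "inside j d" using ab n unfolding inside_def by auto
      then show False using e d unfolding valid_def by blast
    qed
    consider "d \<in> T" "e \<in> T" | "d \<in> T" "e \<in> NN n T" | "d \<in> NN n T" "e \<in> T" | "d \<in> NN n T" "e \<in> NN n T"
      using d e unfolding gE_def by blast
    then show ?thesis
    proof cases
      case 1 then show ?thesis using tri_nc[OF T] by blast
    next
      case 2 then show ?thesis using mixed unfolding NN_iff by blast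
    next
      case 3 then show ?thesis using mixed crosses_sym unfolding NN_iff by blast
    next
      case 4 then have "n \<in> d" "n \<in> e" unfolding NN_iff by auto
      then show ?thesis using crosses_disj by blast
    qed
  qed
  show "\<exists>e\<in>gE n T. crosses d e" if d: "d \<in> diags n" "d \<notin> gE n T" for d
  proof -
    obtain a b where ab: "d = {a,b}" "1 \<le> a" "a + 2 \<le> b" "b \<le> n" "\<not> (a = 1 \<and> b = n)"
      by (rule diagE[OF n3 d(1)])
    show ?thesis
    proof (cases "b = n")
      case True
      then have "\<not> valid n T a" using d(2) unfolding gE_def Un_iff NN_iff ab by blast
      then obtain d' where d': "d' \<in> T" "inside a d'" using ab True unfolding valid_def by auto
      then obtain x y where xy: "d' = {x,y}" "x < a" "a < y" unfolding inside_def by blast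
      have "y \<le> n - 1"
      proof -
        obtain p q where "d' = {p,q}" "1 \<le> p" "p + 2 \<le> q" "q \<le> n - 1" "\<not> (p = 1 \<and> q = n - 1)"
          by (rule tri_pre[OF n T d'(1)])
        then show ?thesis using xy by (auto simp: doubleton_eq_iff)
      qed
      then have "crosses {x,y} {a,n}" using crosses_iff[of x y a n] xy n by auto
      then show ?thesis using d' xy ab True crosses_sym unfolding gE_def by blast
    next
      case False
      show ?thesis
      proof (cases "a = 1 \<and> b = n - 1")
        case True
        obtain j where j: "valid n T j" using X[OF n T] by blast
        have "crosses {1,n-1} {j,n}" using crosses_iff[of 1 "n-1" j n] j n unfolding valid_def by auto
        moreover have "{j,n} \<in> gE n T" unfolding gE_def Un_iff NN_iff using j by blast
        ultimately show ?thesis using True ab by blast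
      next
        case False': False
        have "d \<in> diags (n-1)" using ab False False' n by (auto intro!: diagI)
        moreover have "d \<notin> T" using d(2) unfolding gE_def by blast
        ultimately show ?thesis using tri_max[OF T] unfolding gE_def by blast
      qed
    qed
  qed
qed

lemma S2:
  assumes n: "n \<ge> 4" and T: "T \<in> triangulations (n-1)"
  shows "shE n T \<in> triangulations n"
proof (rule triI)
  have n3: "n \<ge> 3" using n by simp
  have dd: "{1,n-1} \<in> diags n" using n by (auto intro!: diagI)
  show "shE n T \<subseteq> diags n" unfolding shE_def using dd pre_diag[OF n T] by blast
  have nc1: "\<not> crosses {1,n-1} e" if e: "e \<in> T" for e
  proof
    assume c: "crosses {1,n-1} e"
    obtain a b where ab: "e = {a,b}" "1 \<le> a" "a + 2 \<le> b" "b \<le> n - 1" "\<not> (a = 1 \<and> b = n - 1)"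
      by (rule tri_pre[OF n T e])
    show False using crosses_iff[of 1 "n-1" a b] c ab n by auto
  qed
  show "\<not> crosses d e" if d: "d \<in> shE n T" and e: "e \<in> shE n T" for d e
    using d e nc1 crosses_sym crosses_irrefl tri_nc[OF T] unfolding shE_def by blast
  show "\<exists>e\<in>shE n T. crosses d e" if d: "d \<in> diags n" "d \<notin> shE n T" for d
  proof -
    obtain a b where ab: "d = {a,b}" "1 \<le> a" "a + 2 \<le> b" "b \<le> n" "\<not> (a = 1 \<and> b = n)"
      by (rule diagE[OF n3 d(1)])
    show ?thesis
    proof (cases "b = n")
      case True
      have "crosses {1,n-1} {a,n}" using crosses_iff[of 1 "n-1" a n] ab True n by auto
      then show ?thesis using ab True crosses_sym unfolding shE_def by blast
    next
      case False
      have ne: "\<not> (a = 1 \<and> b = n - 1)" using d(2) ab unfolding shE_def by auto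
      have "d \<in> diags (n-1)" using ab False ne n by (auto intro!: diagI)
      moreover have "d \<notin> T" using d(2) unfolding shE_def by blast
      ultimately show ?thesis using tri_max[OF T] unfolding shE_def by blast
    qed
  qed
qed

lemma S3:
  assumes n: "n \<ge> 4"
  shows "star n n \<in> triangulations n"
proof (rule triI)
  have n3: "n \<ge> 3" using n by simp
  show "star n n \<subseteq> diags n" unfolding star_def by blast
  show "\<not> crosses d e" if "d \<in> star n n" "e \<in> star n n" for d e
    using that crosses_disj unfolding star_def by blast
  show "\<exists>e\<in>star n n. crosses d e" if d: "d \<in> diags n" "d \<notin> star n n" for d
  proof -
    obtain a b where ab: "d = {a,b}" "1 \<le> a" "a + 2 \<le> b" "b \<le> n" "\<not> (a = 1 \<and> b = n)"
      by (rule diagE[OF n3 d(1)])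
    have bn: "b \<noteq> n" using d ab unfolding star_def by auto
    have "{a+1,n} \<in> diags n" using ab bn by (auto intro!: diagI[OF n3])
    then have "{a+1,n} \<in> star n n" unfolding star_def by auto
    moreover have "crosses {a,b} {a+1,n}" using crosses_iff[of a b "a+1" n] ab bn by auto
    ultimately show ?thesis using ab by blast
  qed
qed

lemma kadj: "X \<inter> Y = {} \<Longrightarrow> X \<noteq> {} \<Longrightarrow> kneser_adj X Y"
  unfolding kneser_adj_def by blast

lemma S4:
  assumes n: "n \<ge> 5" and T1: "T1 \<in> triangulations (n-1)" and T2: "T2 \<in> triangulations (n-1)"
    and adj: "kneser_adj T1 T2"
  shows "kneser_adj (gE n T1) (gE n T2) \<and> kneser_adj (shE n T1) (gE n T2) \<and> kneser_adj (gE n T1) (shE n T2)"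
proof -
  have n4: "n \<ge> 4" using n by simp
  have dis: "T1 \<inter> T2 = {}" using adj unfolding kneser_adj_def by blast
  have ne: "gE n T \<noteq> {}" if TT: "T \<in> triangulations (n-1)" for T
  proof -
    obtain j where "valid n T j" using X[OF n4 TT] by blast
    then have "{j,n} \<in> gE n T" unfolding gE_def NN_def by blast
    then show ?thesis by blast
  qed
  have nnT: "e \<notin> T" if "e \<in> NN n T'" "T \<in> triangulations (n-1)" for e T T'
  proof
    assume "e \<in> T"
    then have "n \<notin> e" using notn[OF n4 that(2)] by blast
    moreover have "n \<in> e" using that(1) unfolding NN_iff by auto
    ultimately show False by blast
  qed
  have nnT1: "T1 \<inter> NN n T = {}" "T2 \<inter> NN n T = {}" for T using nnT T1 T2 by blast+
  have NNd: "NN n T1 \<inter> NN n T2 = {}"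
  proof (rule ccontr)
    assume "NN n T1 \<inter> NN n T2 \<noteq> {}"
    then obtain e where e: "e \<in> NN n T1" "e \<in> NN n T2" by blast
    obtain j where j: "e = {j,n}" "valid n T1 j" using e(1) unfolding NN_iff by blast
    obtain j' where j': "e = {j',n}" "valid n T2 j'" using e(2) unfolding NN_iff by blast
    have jj: "{j,n} = {j',n}" "valid n T1 j" "valid n T2 j'" using j j' by auto
    have "j < n" "j' < n" using jj n unfolding valid_def by auto
    then have "j = j'" using jj(1) by (metis doubleton_eq_iff less_irrefl)
    then have v: "valid n T1 j" "valid n T2 j" using jj by auto
    show False
    proof (cases "j = 2")
      case True
      then have "j \<noteq> n - 2" using n by auto
      then have "{j,n-1} \<in> T1" "{j,n-1} \<in> T2" using K[OF n4 T1 v(1)] K[OF n4 T2 v(2)] by auto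
      then show False using dis by blast
    next
      case False
      then have "{1,j} \<in> T1" "{1,j} \<in> T2" using K[OF n4 T1 v(1)] K[OF n4 T2 v(2)] by auto
      then show False using dis by blast
    qed
  qed
  have g: "gE n T1 \<inter> gE n T2 = {}"
    using dis NNd nnT1 unfolding gE_def by blast
  have nin: "{1,n-1} \<notin> gE n T" if "T \<in> triangulations (n-1)" for T
  proof -
    have "{1,n-1} \<notin> T" using tri_sub[OF that] not_1n1[OF n4] by blast
    moreover have "{1,n-1} \<notin> NN n T" unfolding NN_iff using n by (auto simp: doubleton_eq_iff)
    ultimately show ?thesis unfolding gE_def by blast
  qed
  have s1: "shE n T1 \<inter> gE n T2 = {}"
    using nin[OF T2] dis nnT1 unfolding shE_def gE_def by blast
  have s2: "gE n T1 \<inter> shE n T2 = {}"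
    using nin[OF T1] dis nnT1 unfolding shE_def gE_def by blast
  have "shE n T1 \<noteq> {}" unfolding shE_def by blast
  then show ?thesis using g s1 s2 ne[OF T1] kadj by blast
qed

lemma S5:
  assumes n: "n \<ge> 4" and T: "T \<in> triangulations (n-1)"
  shows "kneser_adj (star n n) (shE n T)"
proof (rule kadj)
  have "{2,n} \<in> diags n" using n by (auto intro!: diagI)
  then show "star n n \<noteq> {}" unfolding star_def by auto
  have "n \<notin> {1, n-1}" using n by auto
  then show "star n n \<inter> shE n T = {}" using notn[OF n T] unfolding star_def shE_def by blast
qed

lemma tri3_empty: "{} \<in> triangulations 3"
  by (rule triI) (auto simp: diags3)

lemma mstep:
  assumes n: "n \<ge> 4" and col: "colourable V kneser_adj k" and w: "star n n \<in> V"
    and gs: "\<forall>a\<in>triangulations (n-1). gE n a \<in> V \<and> shE n a \<in> V"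
  shows "colourable (triangulations (n-1)) kneser_adj (k-1)"
proof (rule mycielski[OF col w])
  show "\<forall>a\<in>triangulations (n-1). gE n a \<in> V" using gs by blast
  show "\<forall>a\<in>triangulations (n-1). shE n a \<in> V" using gs by blast
  show "\<forall>a\<in>triangulations (n-1). kneser_adj (star n n) (shE n a)" using S5[OF n] by blast
  show "\<forall>a1\<in>triangulations (n - 1). \<forall>a2\<in>triangulations (n - 1). kneser_adj a1 a2 \<longrightarrow>
     kneser_adj (gE n a1) (gE n a2) \<and> kneser_adj (shE n a1) (gE n a2) \<and> kneser_adj (gE n a1) (shE n a2)"
  proof (cases "n = 4")
    case True
    have "a1 = a2" if "a1 \<in> triangulations (n-1)" "a2 \<in> triangulations (n-1)" for a1 a2
      using tri3[of a1] tri3[of a2] that True by simp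
    then show ?thesis unfolding kneser_adj_def by blast
  next
    case False
    then have "n \<ge> 5" using n by simp
    then show ?thesis using S4 by blast
  qed
qed

lemma LB_aux: "\<not> colourable (triangulations (m+4)) kneser_adj (m+1)"
proof (induction m)
  case 0
  show ?case
  proof
    assume c: "colourable (triangulations (0+4)) kneser_adj (0+1)"
    have "colourable (triangulations (4-1)) kneser_adj (1-1)"
      by (rule mstep[of 4]) (use c S1[of 4] S2[of 4] S3[of 4] in auto)
    then show False using tri3_empty unfolding colourable_def by auto
  qed
next
  case (Suc m)
  show ?case
  proof
    assume c: "colourable (triangulations (Suc m+4)) kneser_adj (Suc m+1)"
    have "colourable (triangulations (Suc m + 4 - 1)) kneser_adj (Suc m + 1 - 1)"
      by (rule mstep[of "Suc m + 4"]) (use c S1[of "Suc m + 4"] S2[of "Suc m + 4"] S3[of "Suc m + 4"] in auto)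
    moreover have "Suc m + 4 - 1 = m + 4" "Suc m + 1 - 1 = m + 1" by simp_all
    ultimately show False using Suc.IH by (simp add: add.commute)
  qed
qed

lemma LB:
  assumes "n \<ge> 4"
  shows "\<not> colourable (triangulations n) kneser_adj (n-3)"
proof -
  have "n - 4 + 4 = n" "n - 4 + 1 = n - 3" using assms by simp_all
  then show ?thesis using LB_aux[of "n-4"] by simp
qed

lemma B:
  assumes n: "n \<ge> 5" and T: "T \<in> triangulations n" and de: "d \<in> T" "e \<in> T" "d \<noteq> e" "n \<in> d" "n \<in> e"
    and ns: "T \<noteq> star n n"
  shows "\<not> colourable (triangulations n - {T}) kneser_adj (n-3)"
proof
  assume c: "colourable (triangulations n - {T}) kneser_adj (n-3)"
  have n4: "n \<ge> 4" using n by simp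
  have gs: "\<forall>a\<in>triangulations (n-1). gE n a \<in> triangulations n - {T} \<and> shE n a \<in> triangulations n - {T}"
  proof
    fix a assume a: "a \<in> triangulations (n-1)"
    have "gE n a \<noteq> T"
    proof
      assume eq: "gE n a = T"
      have "d \<in> NN n a" "e \<in> NN n a" using de eq notn[OF n4 a] unfolding gE_def by auto
      then obtain j j' where "d = {j,n}" "valid n a j" "e = {j',n}" "valid n a j'" unfolding NN_iff by blast
      then show False using U[OF n4 a] de(3) by blast
    qed
    moreover have "shE n a \<noteq> T"
    proof
      assume eq: "shE n a = T"
      have "n \<notin> {1,n-1}" using n by auto
      then show False using de eq notn[OF n4 a] unfolding shE_def by auto
    qed
    ultimately show "gE n a \<in> triangulations n - {T} \<and> shE n a \<in> triangulations n - {T}"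
      using S1[OF n4 a] S2[OF n4 a] by blast
  qed
  have "colourable (triangulations (n-1)) kneser_adj (n-3-1)"
    by (rule mstep[OF n4 c _ gs]) (use S3[OF n4] ns in blast)
  moreover have "n - 3 - 1 = (n-1) - 3" by simp
  moreover have "n - 1 \<ge> 4" using n by simp
  ultimately show False using LB[of "n-1"] by simp
qed

definition rot1 :: "nat \<Rightarrow> nat \<Rightarrow> nat" where
  "rot1 n i = (if i = n then 1 else Suc i)"

definition rk :: "nat \<Rightarrow> nat \<Rightarrow> nat \<Rightarrow> nat" where
  "rk n k = (rot1 n ^^ k)"

definition hk :: "nat \<Rightarrow> nat \<Rightarrow> nat set set \<Rightarrow> nat set set" where
  "hk n k T = (\<lambda>d. rk n k ` d) ` T"

lemma rk_formula:
  assumes i: "i \<in> {1..n}"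
  shows "rk n k i = (i - 1 + k) mod n + 1"
proof (induction k)
  case 0
  then show ?case using i unfolding rk_def by auto
next
  case (Suc k)
  have n: "n \<ge> 1" using i by auto
  have "rk n (Suc k) i = rot1 n (rk n k i)" unfolding rk_def by simp
  also have "\<dots> = rot1 n ((i - 1 + k) mod n + 1)" using Suc by simp
  also have "\<dots> = (i - 1 + Suc k) mod n + 1"
  proof -
    have "(i - 1 + k) mod n < n" using n by simp
    then show ?thesis unfolding rot1_def using n
      by (auto simp: mod_Suc)
  qed
  finally show ?case .
qed

lemma rk_range: "i \<in> {1..n} \<Longrightarrow> rk n k i \<in> {1..n}"
  using rk_formula[of i n k] by (auto simp: Suc_le_eq)

lemma rk_add: "rk n a (rk n b i) = rk n (a + b) i"
  unfolding rk_def by (simp add: funpow_add)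

lemma rk_n: "i \<in> {1..n} \<Longrightarrow> rk n n i = i"
proof -
  assume i: "i \<in> {1..n}"
  have "(i - 1 + n) mod n = (i - 1) mod n" by (rule mod_add_self2)
  also have "\<dots> = i - 1" using i by auto
  finally show ?thesis using rk_formula[OF i, of n] i by auto
qed

lemma rk_inv: "i \<in> {1..n} \<Longrightarrow> a + b = n \<Longrightarrow> rk n a (rk n b i) = i"
  using rk_add rk_n by metis

lemma rk_img_inv: "d \<subseteq> {1..n} \<Longrightarrow> a + b = n \<Longrightarrow> rk n a ` rk n b ` d = d"
proof -
  assume d: "d \<subseteq> {1..n}" and ab: "a + b = n"
  have "rk n a ` rk n b ` d = (\<lambda>i. rk n a (rk n b i)) ` d" by (simp add: image_image)
  also have "\<dots> = d" using rk_inv[OF _ ab] d by (simp add: subset_iff)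
  finally show ?thesis .
qed

lemma diag_sub: "n \<ge> 3 \<Longrightarrow> d \<in> diags n \<Longrightarrow> d \<subseteq> {1..n}"
  by (erule diagE) auto

lemma rot1_pair:
  assumes "a < b" "b \<le> n"
  shows "rot1 n ` {a,b} = (if b = n then {1, a+1} else {a+1, b+1})"
proof -
  have "rot1 n a = a + 1" using assms unfolding rot1_def by simp
  moreover have "rot1 n b = (if b = n then 1 else b + 1)" unfolding rot1_def by simp
  ultimately show ?thesis by (simp add: insert_commute)
qed

lemma rot1_diag:
  assumes n: "n \<ge> 3" and d: "d \<in> diags n"
  shows "rot1 n ` d \<in> diags n"
proof -
  obtain a b where ab: "d = {a,b}" "1 \<le> a" "a + 2 \<le> b" "b \<le> n" "\<not> (a = 1 \<and> b = n)"
    by (rule diagE[OF n d])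
  have r: "rot1 n ` d = (if b = n then {1, a+1} else {a+1, b+1})" using rot1_pair[of a b n] ab by simp
  show ?thesis
  proof (cases "b = n")
    case True
    have "{1, a+1} \<in> diags n" using ab True by (intro diagI[OF n]) auto
    then show ?thesis using r True by simp
  next
    case False
    have "{a+1, b+1} \<in> diags n" using ab False by (intro diagI[OF n]) auto
    then show ?thesis using r False by simp
  qed
qed

lemma share_nc: "x \<in> d \<Longrightarrow> x \<in> e \<Longrightarrow> \<not> crosses d e"
  using crosses_disj by blast

lemma rot1_crosses:
  assumes n: "n \<ge> 3" and d: "d \<in> diags n" and e: "e \<in> diags n"
  shows "crosses (rot1 n ` d) (rot1 n ` e) \<longleftrightarrow> crosses d e"
proof -
  obtain a b where ab: "d = {a,b}" "1 \<le> a" "a + 2 \<le> b" "b \<le> n" "\<not> (a = 1 \<and> b = n)"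
    by (rule diagE[OF n d])
  obtain c w where cw: "e = {c,w}" "1 \<le> c" "c + 2 \<le> w" "w \<le> n" "\<not> (c = 1 \<and> w = n)"
    by (rule diagE[OF n e])
  have rd: "rot1 n ` d = (if b = n then {1, a+1} else {a+1, b+1})" using rot1_pair[of a b n] ab by simp
  have re: "rot1 n ` e = (if w = n then {1, c+1} else {c+1, w+1})" using rot1_pair[of c w n] cw by simp
  have cd: "crosses d e \<longleftrightarrow> (a<c \<and> c<b \<and> b<w) \<or> (c<a \<and> a<w \<and> w<b)"
    unfolding ab(1) cw(1) by (rule crosses_iff) (use ab cw in auto)
  consider "b = n" "w = n" | "b = n" "w \<noteq> n" | "b \<noteq> n" "w = n" | "b \<noteq> n" "w \<noteq> n" by blast
  then show ?thesis
  proof cases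
    case 1
    then have r1: "rot1 n ` d = {1, a+1}" "rot1 n ` e = {1, c+1}" using rd re by simp_all
    have "\<not> crosses (rot1 n ` d) (rot1 n ` e)" unfolding r1 by (rule share_nc[of 1]) auto
    moreover have "\<not> crosses d e" unfolding ab(1) cw(1) by (rule share_nc[of n]) (use 1 in auto)
    ultimately show ?thesis by blast
  next
    case 2
    then have r1: "rot1 n ` d = {1, a+1}" "rot1 n ` e = {c+1, w+1}" using rd re by simp_all
    have "crosses (rot1 n ` d) (rot1 n ` e) \<longleftrightarrow> (1<c+1 \<and> c+1<a+1 \<and> a+1<w+1) \<or> (c+1<1 \<and> 1<w+1 \<and> w+1<a+1)"
      unfolding r1 by (rule crosses_iff) (use ab cw in auto)
    then show ?thesis using cd ab cw 2 by auto
  next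
    case 3
    then have r1: "rot1 n ` d = {a+1, b+1}" "rot1 n ` e = {1, c+1}" using rd re by simp_all
    have "crosses (rot1 n ` d) (rot1 n ` e) \<longleftrightarrow> (a+1<1 \<and> 1<b+1 \<and> b+1<c+1) \<or> (1<a+1 \<and> a+1<c+1 \<and> c+1<b+1)"
      unfolding r1 by (rule crosses_iff) (use ab cw in auto)
    then show ?thesis using cd ab cw 3 by auto
  next
    case 4
    then have r1: "rot1 n ` d = {a+1, b+1}" "rot1 n ` e = {c+1, w+1}" using rd re by simp_all
    have "crosses (rot1 n ` d) (rot1 n ` e) \<longleftrightarrow> (a+1<c+1 \<and> c+1<b+1 \<and> b+1<w+1) \<or> (c+1<a+1 \<and> a+1<w+1 \<and> w+1<b+1)"
      unfolding r1 by (rule crosses_iff) (use ab cw in auto)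
    then show ?thesis using cd by auto
  qed
qed

lemma rk_diag_crosses:
  assumes n: "n \<ge> 3"
  shows "\<forall>d\<in>diags n. \<forall>e\<in>diags n. rk n k ` d \<in> diags n \<and> (crosses (rk n k ` d) (rk n k ` e) \<longleftrightarrow> crosses d e)"
proof (induction k)
  case 0
  then show ?case unfolding rk_def by simp
next
  case (Suc k)
  have img: "rk n (Suc k) ` x = rot1 n ` (rk n k ` x)" for x
    unfolding rk_def by (simp add: image_comp)
  show ?case
  proof (intro ballI)
    fix d e assume d: "d \<in> diags n" and e: "e \<in> diags n"
    have d': "rk n k ` d \<in> diags n" and e': "rk n k ` e \<in> diags n" using Suc d e by blast+
    show "rk n (Suc k) ` d \<in> diags n \<and> crosses (rk n (Suc k) ` d) (rk n (Suc k) ` e) = crosses d e"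
      unfolding img using rot1_diag[OF n d'] rot1_crosses[OF n d' e'] Suc d e by blast
  qed
qed

lemma rk_diag: "n \<ge> 3 \<Longrightarrow> d \<in> diags n \<Longrightarrow> rk n k ` d \<in> diags n"
  using rk_diag_crosses by blast

lemma rk_crosses: "n \<ge> 3 \<Longrightarrow> d \<in> diags n \<Longrightarrow> e \<in> diags n \<Longrightarrow> crosses (rk n k ` d) (rk n k ` e) \<longleftrightarrow> crosses d e"
  using rk_diag_crosses by blast

lemma hk_inv:
  assumes n: "n \<ge> 3" and T: "T \<subseteq> diags n" and ab: "a + b = n"
  shows "hk n a (hk n b T) = T"
proof -
  have "hk n a (hk n b T) = (\<lambda>d. rk n a ` rk n b ` d) ` T" unfolding hk_def by (simp add: image_image)
  also have "\<dots> = (\<lambda>d. d) ` T"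
    using rk_img_inv[OF _ ab] diag_sub[OF n] T by (intro image_cong) auto
  finally show ?thesis by simp
qed

lemma hk_tri:
  assumes n: "n \<ge> 3" and T: "T \<in> triangulations n" and k: "k \<le> n"
  shows "hk n k T \<in> triangulations n"
proof (rule triI)
  show "hk n k T \<subseteq> diags n" unfolding hk_def using rk_diag[OF n] tri_sub[OF T] by blast
  show "\<not> crosses d e" if "d \<in> hk n k T" "e \<in> hk n k T" for d e
    using that tri_nc[OF T] rk_crosses[OF n] tri_sub[OF T] unfolding hk_def by blast
  show "\<exists>e\<in>hk n k T. crosses d e" if d: "d \<in> diags n" "d \<notin> hk n k T" for d
  proof -
    define d' where "d' = rk n (n-k) ` d"
    have d'D: "d' \<in> diags n" unfolding d'_def using rk_diag[OF n d(1)] .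
    have dd: "rk n k ` d' = d" unfolding d'_def using rk_img_inv[OF diag_sub[OF n d(1)]] k by simp
    have "d' \<notin> T" using d(2) dd unfolding hk_def by blast
    then obtain e where e: "e \<in> T" "crosses d' e" using tri_max[OF T d'D] by blast
    have "crosses d (rk n k ` e)" using rk_crosses[OF n d'D, of e k] e tri_sub[OF T] dd by auto
    then show ?thesis using e unfolding hk_def by blast
  qed
qed

lemma hk_transfer:
  assumes n: "n \<ge> 3" and T: "T \<in> triangulations n" and k: "k \<le> n"
    and col: "colourable (triangulations n - {hk n k T}) kneser_adj c"
  shows "colourable (triangulations n - {T}) kneser_adj c"
proof -
  obtain f where f: "\<forall>x\<in>triangulations n - {hk n k T}. f x < c"
    "\<forall>x\<in>triangulations n - {hk n k T}. \<forall>y\<in>triangulations n - {hk n k T}. kneser_adj x y \<longrightarrow> f x \<noteq> f y"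
    using col unfolding colourable_def by blast
  have inv: "hk n (n-k) (hk n k x) = x" if "x \<in> triangulations n" for x
    using hk_inv[OF n tri_sub[OF that]] k by simp
  have mem: "hk n k x \<in> triangulations n - {hk n k T}" if "x \<in> triangulations n - {T}" for x
    using hk_tri[OF n _ k] inv that T by (metis Diff_iff singletonD singletonI)
  have adj: "kneser_adj (hk n k x) (hk n k y)" if "x \<in> triangulations n" "y \<in> triangulations n" "kneser_adj x y" for x y
  proof -
    have "hk n k x \<noteq> hk n k y" using inv that unfolding kneser_adj_def by metis
    moreover have "hk n k x \<inter> hk n k y = {}"
    proof (rule ccontr)
      assume "hk n k x \<inter> hk n k y \<noteq> {}"
      then obtain d1 d2 where d: "d1 \<in> x" "d2 \<in> y" "rk n k ` d1 = rk n k ` d2" unfolding hk_def by blast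
      have "rk n (n-k) ` rk n k ` d1 = d1" "rk n (n-k) ` rk n k ` d2 = d2"
        using rk_img_inv diag_sub[OF n] tri_sub that d k by (metis le_add_diff_inverse2 subsetD)+
      then have "d1 = d2" using d(3) by metis
      then show False using d that unfolding kneser_adj_def by blast
    qed
    ultimately show ?thesis unfolding kneser_adj_def by blast
  qed
  show ?thesis unfolding colourable_def
    by (rule exI[of _ "\<lambda>x. f (hk n k x)"]) (use f mem adj in auto)
qed

lemma hk_star:
  assumes n: "n \<ge> 3" and u: "u \<in> {1..n}" and k: "k \<le> n"
  shows "hk n k (star n u) = star n (rk n k u)"
proof
  show "hk n k (star n u) \<subseteq> star n (rk n k u)"
    unfolding hk_def star_def using rk_diag[OF n] by blast
  show "star n (rk n k u) \<subseteq> hk n k (star n u)"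
  proof
    fix D assume D: "D \<in> star n (rk n k u)"
    define d where "d = rk n (n-k) ` D"
    have dD: "d \<in> diags n" unfolding d_def using rk_diag[OF n] D unfolding star_def by blast
    have "rk n (n-k) (rk n k u) = u" using rk_inv[OF u] k by simp
    then have ud: "u \<in> d" unfolding d_def using D unfolding star_def by force
    have "rk n k ` d = D" unfolding d_def using rk_img_inv diag_sub[OF n] D k unfolding star_def
      by (metis (no_types, lifting) le_add_diff_inverse mem_Collect_eq)
    then show "D \<in> hk n k (star n u)" unfolding hk_def star_def using dD ud by blast
  qed
qed

lemma rk_to_n: "v \<in> {1..n} \<Longrightarrow> rk n (n - v) v = n"
proof -
  assume v: "v \<in> {1..n}"
  have "v - 1 + (n - v) = n - 1" using v by auto
  then show ?thesis using rk_formula[OF v, of "n-v"] v by auto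
qed

lemma rk_from_n: "v \<in> {1..n} \<Longrightarrow> rk n v n = v"
proof -
  assume v: "v \<in> {1..n}"
  have nn: "n \<in> {1..n}" using v by auto
  have "(n - 1 + v) mod n = (v - 1 + n) mod n" using v by (simp add: algebra_simps)
  also have "\<dots> = (v - 1) mod n" by (rule mod_add_self2)
  also have "\<dots> = v - 1" using v by auto
  finally show ?thesis using rk_formula[OF nn, of v] v by auto
qed

lemma chrom_le: "colourable V adj k \<Longrightarrow> chromatic_number V adj \<le> k"
  unfolding chrom_eq by (rule Least_le)

lemma chrom_eqI: "colourable V adj k \<Longrightarrow> (\<And>m. m < k \<Longrightarrow> \<not> colourable V adj m) \<Longrightarrow> chromatic_number V adj = k"
  unfolding chrom_eq by (rule Least_equality) (auto simp: not_less[symmetric])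

lemma n4_star:
  assumes T: "T \<in> triangulations 4"
  shows "is_star 4 T"
proof (cases "T = star 4 4")
  case True
  then show ?thesis unfolding is_star_def star_def by auto
next
  case False
  obtain a where a: "1 \<le> a" "a + 2 \<le> 4 - 1" "{a,a+2} \<in> T" using D1[OF _ T False] by auto
  then have a1: "a = 1" by auto
  then have 13: "{1,3} \<in> T" using a by (simp add: numeral_eq_Suc)
  have "T = star 4 1"
  proof
    show "T \<subseteq> star 4 1"
    proof
      fix d assume d: "d \<in> T"
      obtain x y where xy: "d = {x,y}" "1 \<le> x" "x + 2 \<le> y" "y \<le> 4" "\<not> (x = 1 \<and> y = 4)"
        by (rule tri_diagE[OF _ T d]) auto
      have "(x = 1 \<and> y = 3) \<or> (x = 2 \<and> y = 4)" using xy by auto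
      moreover have "\<not> (x = 2 \<and> y = 4)"
      proof
        assume "x = 2 \<and> y = 4"
        then have "crosses {1,3} d" using crosses_iff[of 1 3 2 4] xy by simp
        then show False using tri_nc[OF T 13 d] by blast
      qed
      ultimately have "d = {1,3}" using xy by auto
      then show "d \<in> star 4 1" using d tri_sub[OF T] unfolding star_def by auto
    qed
    show "star 4 1 \<subseteq> T"
    proof
      fix d assume d: "d \<in> star 4 1"
      obtain x y where xy: "d = {x,y}" "1 \<le> x" "x + 2 \<le> y" "y \<le> 4" "\<not> (x = 1 \<and> y = 4)"
        by (rule diagE[of 4 d]) (use d in \<open>auto simp: star_def\<close>)
      have "1 \<in> d" using d unfolding star_def by auto
      then have "d = {1,3}" using xy by auto
      then show "d \<in> T" using 13 by simp
    qed
  qed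
  then show ?thesis unfolding is_star_def star_def by auto
qed

theorem theorem1p3:
  fixes n :: nat and T :: "nat set set"
  assumes "n \<ge> 3" and "T \<in> triangulations n"
  shows "chromatic_number (triangulations n - {T}) kneser_adj = n - 2 \<longleftrightarrow> \<not> is_star n T"
proof -
  have n3: "n \<ge> 3" and T: "T \<in> triangulations n" using assms by auto
  show ?thesis
  proof (cases "is_star n T")
    case True
    then obtain v where v: "v \<in> {1..n}" "T = star n v" unfolding is_star_def star_def by blast
    have "hk n (n - v) T = star n n" using hk_star[OF n3 v(1), of "n - v"] rk_to_n[OF v(1)] v(2) by simp
    then have "colourable (triangulations n - {hk n (n - v) T}) kneser_adj (n-3)" using colD[OF n3] by simp
    then have "colourable (triangulations n - {T}) kneser_adj (n-3)" by (rule hk_transfer[OF n3 T diff_le_self])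
    then have "chromatic_number (triangulations n - {T}) kneser_adj \<le> n - 3" by (rule chrom_le)
    then show ?thesis using True n3 by auto
  next
    case False
    have n5: "n \<ge> 5"
    proof (rule ccontr)
      assume "\<not> n \<ge> 5"
      then consider "n = 3" | "n = 4" using n3 by linarith
      then show False
      proof cases
        case 1
        then have "T = {}" using tri3 T by simp
        moreover have "star n 1 = {}" using 1 diags3 unfolding star_def by simp
        ultimately show False using False 1 unfolding is_star_def star_def by auto
      next
        case 2
        then show False using n4_star T False by simp
      qed
    qed
    have ns: "T \<noteq> star n n" using False n3 unfolding is_star_def star_def by auto
    obtain v d e where vde: "d \<in> T" "e \<in> T" "d \<noteq> e" "v \<in> d" "v \<in> e" using E1[OF n5 T ns] by blast
    have v: "v \<in> {1..n}" using vde diag_sub[OF n3] tri_sub[OF T] by blast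
    define T2 where "T2 = hk n (n - v) T"
    have T2: "T2 \<in> triangulations n" unfolding T2_def by (rule hk_tri[OF n3 T]) simp
    have bk: "hk n v T2 = T" unfolding T2_def using hk_inv[OF n3 tri_sub[OF T]] v by simp
    have d2: "rk n (n-v) ` d \<in> T2" "rk n (n-v) ` e \<in> T2" unfolding T2_def hk_def using vde by auto
    have n2: "n \<in> rk n (n-v) ` d" "n \<in> rk n (n-v) ` e" using vde rk_to_n[OF v] by (metis imageI)+
    have dne: "rk n (n-v) ` d \<noteq> rk n (n-v) ` e"
    proof
      assume eq: "rk n (n-v) ` d = rk n (n-v) ` e"
      have "rk n v ` rk n (n-v) ` d = d" "rk n v ` rk n (n-v) ` e = e"
        using rk_img_inv diag_sub[OF n3] tri_sub[OF T] vde v by (metis atLeastAtMost_iff le_add_diff_inverse subsetD)+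
      then show False using eq vde(3) by metis
    qed
    have ns2: "T2 \<noteq> star n n"
    proof
      assume "T2 = star n n"
      then have "T = star n v" using bk hk_star[OF n3 _ , of n v] rk_from_n[OF v] v by auto
      then show False using False v unfolding is_star_def star_def by blast
    qed
    have nc2: "\<not> colourable (triangulations n - {T2}) kneser_adj (n-3)"
      by (rule B[OF n5 T2 d2 dne n2 ns2])
    have nc: "\<not> colourable (triangulations n - {T}) kneser_adj (n-3)"
    proof
      assume "colourable (triangulations n - {T}) kneser_adj (n-3)"
      then have "colourable (triangulations n - {hk n v T2}) kneser_adj (n-3)" using bk by simp
      moreover have "v \<le> n" using v by auto
      ultimately have "colourable (triangulations n - {T2}) kneser_adj (n-3)"
        using hk_transfer[OF n3 T2] by blast
      then show False using nc2 by blast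
    qed
    have c: "colourable (triangulations n - {T}) kneser_adj (n-2)"
    proof -
      have "n \<ge> 4" using n5 by simp
      then show ?thesis using colourable_sub[OF colC Diff_subset] by blast
    qed
    have "chromatic_number (triangulations n - {T}) kneser_adj = n - 2"
    proof (rule chrom_eqI[OF c])
      fix m assume "m < n - 2"
      show "\<not> colourable (triangulations n - {T}) kneser_adj m"
      proof
        assume "colourable (triangulations n - {T}) kneser_adj m"
        moreover have "m \<le> n - 3" using \<open>m < n - 2\<close> by simp
        ultimately show False using nc colourable_mono by blast
      qed
    qed
    then show ?thesis using False by simp
  qed
qed

end
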